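(* Let $n\ge 0$ be an integer, $\alpha_0=-\frac{1}{2n+2}$, and for $k\in\mathbb{Z}_+=\{0,1,2,\dots\}$ let $v_k$ be the even eigenfunction $$v_k(t)=c_k\,e^{-\frac{t^{2n+2}}{2n+2}}L^{(\alpha_0)}_{k}\!\left(\frac{t^{2n+2}}{n+1}\right),$$ with $c_k>0$ chosen so that $\|t^{n}v_k\|_{L^2(\mathbb{R})}=1$. Then for every $k$ the function $v_k$ belongs to the Gel'fand–Shilov space $S^{\frac{1}{2n+2}}_{\frac{2n+1}{2n+2}}(\mathbb{R})$, and moreover there is a constant $C_v>0$ independent of $k,\alpha,\beta$ such that for all $\alpha,\beta\in\mathbb{Z}_+$ and $t\in\mathbb{R}$ $$|t^{\alpha}\partial_t^{\beta}v_k(t)|\le C_v^{\,k+\alpha+\beta+1}\,\alpha!^{\frac{1}{2n+2}}\,\beta!^{\frac{2n+1}{2n+2}}.$$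
   Context: $L^{(a)}_k$ denotes the generalized Laguerre polynomial of degree $k$ and parameter $a$. The functions $v_k$ satisfy $-v_k''+t^{2(2n+1)}v_k=E_k t^{2n}v_k$ with $E_k=4k(n+1)+2n+1$. For $a,b>0$, $S^{a}_{b}(\mathbb{R})$ denotes the set of $f\in C^\infty(\mathbb{R})$ for which there are constants $C,A,B>0$ with $|t^{k}f^{(q)}(t)|\le C A^{k}B^{q}k^{ak}q^{bq}$ for all $k,q\in\mathbb{Z}_+$, $t\in\mathbb{R}$. *)

theory Defs
  imports "HOL-Analysis.Analysis"
begin

definition laguerre :: "real \<Rightarrow> nat \<Rightarrow> real \<Rightarrow> real" where
  "laguerre a k x = (\<Sum>i\<le>k. (-1)^i * ((real k + a) gchoose (k - i)) * x^i / fact i)"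

definition alpha0 :: "nat \<Rightarrow> real" where
  "alpha0 n = - 1 / (2 * real n + 2)"

definition u_fun :: "nat \<Rightarrow> nat \<Rightarrow> real \<Rightarrow> real" where
  "u_fun n k t = exp (- (t ^ (2*n+2)) / (2 * real n + 2))
                 * laguerre (alpha0 n) k (t ^ (2*n+2) / (real n + 1))"

definition c_const :: "nat \<Rightarrow> nat \<Rightarrow> real" where
  "c_const n k = 1 / sqrt (integral\<^sup>L lborel (\<lambda>t. (t ^ n * u_fun n k t)^2))"

definition v_fun :: "nat \<Rightarrow> nat \<Rightarrow> real \<Rightarrow> real" where
  "v_fun n k t = c_const n k * u_fun n k t"

definition selfpow :: "nat \<Rightarrow> real \<Rightarrow> real" where
  "selfpow k a = (if k = 0 then 1 else real k powr (a * real k))"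

definition smooth_real :: "(real \<Rightarrow> real) \<Rightarrow> bool" where
  "smooth_real f \<longleftrightarrow> (\<forall>q t. ((deriv ^^ q) f) differentiable (at t))"

definition gelfand_shilov :: "real \<Rightarrow> real \<Rightarrow> (real \<Rightarrow> real) set" where
  "gelfand_shilov a b = {f. smooth_real f \<and>
     (\<exists>C A B. C > 0 \<and> A > 0 \<and> B > 0 \<and>
       (\<forall>k q t. \<bar>t ^ k * (deriv ^^ q) f t\<bar> \<le> C * A ^ k * B ^ q * selfpow k a * selfpow q b))}"

end

theory Submission
  imports Defs "HOL-Computational_Algebra.Polynomial"
begin

lemma exp_ge_pow_fact:
  fixes y :: real assumes "0 \<le> y" shows "y ^ N / fact N \<le> exp y"
proof -
  have s: "(\<lambda>n. y^n /\<^sub>R fact n) sums exp y" by (rule exp_converges)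
  have "sum (\<lambda>n. y^n /\<^sub>R fact n) {N} \<le> suminf (\<lambda>n. y^n /\<^sub>R fact n)"
    by (rule sum_le_suminf) (use s assms in \<open>auto simp: sums_iff\<close>)
  then show ?thesis using s by (simp add: sums_iff divide_inverse mult.commute)
qed

lemma pow_le_exp_fact:
  fixes y :: real assumes "0 \<le> y" shows "y ^ N \<le> exp y * fact N"
  using exp_ge_pow_fact[OF assms, of N] by (simp add: divide_le_eq)

definition Ef :: "nat \<Rightarrow> real \<Rightarrow> real" where
  "Ef n t = exp (- (t ^ (2*n+2)) / (2 * real n + 2))"

definition Dm :: "nat \<Rightarrow> real poly \<Rightarrow> real poly" where
  "Dm n p = pderiv p - monom 1 (2*n+1) * p"

lemma Ef_deriv: "(Ef n has_real_derivative (- (t ^ (2*n+1)) * Ef n t)) (at t)"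
proof -
  have d1: "((\<lambda>t. t^(2*n+2)) has_real_derivative real (2*n+2) * t^(2*n+1)) (at t)"
    using DERIV_pow[of "2*n+2" t] by simp
  have "((\<lambda>t. - (t ^ (2*n+2)) / (2 * real n + 2)) has_real_derivative
          (- (real (2*n+2) * t ^ (2*n+1)) / (2 * real n + 2))) (at t)"
    using DERIV_cdivide[OF DERIV_minus[OF d1]] by simp
  moreover have "(- (real (2*n+2) * t ^ (2*n+1)) / (2 * real n + 2)) = - (t ^ (2*n+1))"
    by (simp add: field_simps)
  ultimately have "((\<lambda>t. - (t ^ (2*n+2)) / (2 * real n + 2)) has_real_derivative
          (- (t ^ (2*n+1)))) (at t)" by simp
  from DERIV_exp[THEN DERIV_chain2, OF this] show ?thesis
    unfolding Ef_def by (simp add: mult.commute)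
qed

lemma poly_Ef_deriv:
  "((\<lambda>t. c * (poly p t * Ef n t)) has_real_derivative (c * (poly (Dm n p) t * Ef n t))) (at t)"
proof -
  have "((\<lambda>t. c * (poly p t * Ef n t)) has_real_derivative
     c * (poly (pderiv p) t * Ef n t + (- (t ^ (2*n+1)) * Ef n t) * poly p t)) (at t)"
    by (rule DERIV_cmult[OF DERIV_mult[OF poly_DERIV Ef_deriv]])
  moreover have "poly (pderiv p) t * Ef n t + (- (t ^ (2*n+1)) * Ef n t) * poly p t
     = poly (Dm n p) t * Ef n t"
    by (simp add: Dm_def poly_monom algebra_simps)
  ultimately show ?thesis by simp
qed

lemma deriv_iter:
  "(deriv ^^ q) (\<lambda>t. c * (poly p t * Ef n t)) = (\<lambda>t. c * (poly ((Dm n ^^ q) p) t * Ef n t))"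
proof (induction q)
  case 0 then show ?case by simp
next
  case (Suc q)
  show ?case
    by (simp add: Suc, rule ext, rule DERIV_imp_deriv, rule poly_Ef_deriv)
qed

lemma Dm_add: "Dm n (p + q) = Dm n p + Dm n q"
  by (simp add: Dm_def pderiv_add algebra_simps)
lemma Dm_smult: "Dm n (smult c p) = smult c (Dm n p)"
  by (simp add: Dm_def pderiv_smult smult_diff_right mult_smult_right)
lemma Dm_0: "Dm n 0 = 0" by (simp add: Dm_def)

lemma Dm_sum: "finite A \<Longrightarrow> Dm n (\<Sum>i\<in>A. smult (b i) (p i)) = (\<Sum>i\<in>A. smult (b i) (Dm n (p i)))"
  by (induction A rule: finite_induct) (auto simp: Dm_0 Dm_add Dm_smult)

lemma Dm_iter_sum: "finite A \<Longrightarrow>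
   (Dm n ^^ q) (\<Sum>i\<in>A. smult (b i) (p i)) = (\<Sum>i\<in>A. smult (b i) ((Dm n ^^ q) (p i)))"
  by (induction q) (auto simp: Dm_sum)

lemma coeff_Dm: "coeff (Dm n p) r = real (Suc r) * coeff p (Suc r)
   - (if r < 2*n+1 then 0 else coeff p (r - (2*n+1)))"
  by (simp add: Dm_def coeff_pderiv coeff_monom_mult)

lemma coeff_Dm_iter_zero:
  "j + (2*n+1)*\<beta> < r \<Longrightarrow> coeff ((Dm n ^^ \<beta>) (monom 1 j)) r = 0"
proof (induction \<beta> arbitrary: r)
  case 0 then show ?case by (simp add: coeff_monom)
next
  case (Suc \<beta>)
  have "coeff ((Dm n ^^ \<beta>) (monom 1 j)) (Suc r) = 0" using Suc by simp
  moreover have "\<not> r < 2*n+1 \<Longrightarrow> coeff ((Dm n ^^ \<beta>) (monom 1 j)) (r - (2*n+1)) = 0"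
    using Suc by simp
  ultimately show ?case by (simp add: coeff_Dm)
qed

lemma coeff_bound:
  fixes L :: real
  assumes L1: "1 \<le> L" and LD: "real (j + (2*n+1)*\<beta>) \<le> L"
  shows "\<bar>coeff ((Dm n ^^ \<beta>) (monom 1 j)) r\<bar> * L powr (real r / (2 * real n + 2))
     \<le> 2^\<beta> * L powr (real (j + (2*n+1)*\<beta>) / (2 * real n + 2))"
  using LD
proof (induction \<beta> arbitrary: r)
  case 0 then show ?case by (simp add: coeff_monom)
next
  case (Suc \<beta>)
  define q where "q = (Dm n ^^ \<beta>) (monom 1 j)"
  define D where "D = j + (2*n+1)*\<beta>"
  define M where "M = 2 * real n + 2"
  have M0: "M > 0" by (simp add: M_def)
  have LD': "real D \<le> L" using Suc.prems by (simp add: D_def)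
  have IH: "\<And>r. \<bar>coeff q r\<bar> * L powr (real r / M) \<le> 2^\<beta> * L powr (real D / M)"
    using Suc.IH[OF LD'[unfolded D_def]] by (simp add: q_def D_def M_def)
  have L0: "L > 0" using L1 by simp
  have split: "L powr (real r' / M) * L powr ((2*real n+1) / M) = L powr (real (r' + (2*n+1)) / M)" for r'
  proof -
    have "real (r' + (2*n+1)) / M = real r' / M + (2*real n+1)/M"
      by (simp add: add_divide_distrib[symmetric])
    then show ?thesis by (simp add: powr_add)
  qed
  have t1: "real (Suc r) * \<bar>coeff q (Suc r)\<bar> * L powr (real r / M)
       \<le> 2^\<beta> * L powr (real (D + (2*n+1)) / M)"
  proof (cases "D < Suc r")
    case True
    then have "coeff q (Suc r) = 0" unfolding q_def D_def by (rule coeff_Dm_iter_zero)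
    then show ?thesis by simp
  next
    case False
    then have "real (Suc r) \<le> L" using LD' by linarith
    then have "real (Suc r) * \<bar>coeff q (Suc r)\<bar> * L powr (real r / M)
        \<le> L * \<bar>coeff q (Suc r)\<bar> * L powr (real r / M)"
      by (intro mult_right_mono) auto
    also have "L * L powr (real r / M) = L powr (real (Suc r) / M) * L powr ((2*real n+1) / M)"
    proof -
      have "L * L powr (real r / M) = L powr (1 + real r / M)" using L0 by (simp add: powr_add)
      also have "1 + real r / M = real (Suc r) / M + (2*real n+1) / M"
      proof -
        have "real (Suc r) / M + (2*real n+1) / M = (real r + M) / M"
          by (simp add: add_divide_distrib[symmetric] M_def)
        also have "\<dots> = real r / M + 1" using M0 by (simp add: add_divide_distrib)
        finally show ?thesis by simp
      qed
      finally show ?thesis by (simp add: powr_add)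
    qed
    then have "L * \<bar>coeff q (Suc r)\<bar> * L powr (real r / M)
       = (\<bar>coeff q (Suc r)\<bar> * L powr (real (Suc r) / M)) * L powr ((2*real n+1) / M)"
      by (simp add: algebra_simps)
    also have "\<dots> \<le> (2^\<beta> * L powr (real D / M)) * L powr ((2*real n+1) / M)"
      by (intro mult_right_mono IH) auto
    also have "\<dots> = 2^\<beta> * L powr (real (D + (2*n+1)) / M)"
      using split[of D] by (simp add: algebra_simps)
    finally show ?thesis .
  qed
  have t2: "(if r < 2*n+1 then 0 else \<bar>coeff q (r - (2*n+1))\<bar>) * L powr (real r / M)
       \<le> 2^\<beta> * L powr (real (D + (2*n+1)) / M)"
  proof (cases "r < 2*n+1")
    case True then show ?thesis by simp
  next
    case False
    then have r: "r = (r - (2*n+1)) + (2*n+1)" by simp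
    have "\<bar>coeff q (r - (2*n+1))\<bar> * L powr (real r / M)
       = (\<bar>coeff q (r - (2*n+1))\<bar> * L powr (real (r - (2*n+1)) / M)) * L powr ((2*real n+1) / M)"
      using split[of "r - (2*n+1)"] r by (simp add: algebra_simps)
    also have "\<dots> \<le> (2^\<beta> * L powr (real D / M)) * L powr ((2*real n+1) / M)"
      by (intro mult_right_mono IH) auto
    also have "\<dots> = 2^\<beta> * L powr (real (D + (2*n+1)) / M)"
      using split[of D] by (simp add: algebra_simps)
    finally show ?thesis using False by simp
  qed
  have "\<bar>coeff (Dm n q) r\<bar> \<le> real (Suc r) * \<bar>coeff q (Suc r)\<bar>
      + (if r < 2*n+1 then 0 else \<bar>coeff q (r - (2*n+1))\<bar>)"
    unfolding coeff_Dm
    by (auto simp: abs_mult intro: order_trans[OF abs_triangle_ineq4])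
  then have "\<bar>coeff (Dm n q) r\<bar> * L powr (real r / M) \<le>
     real (Suc r) * \<bar>coeff q (Suc r)\<bar> * L powr (real r / M)
      + (if r < 2*n+1 then 0 else \<bar>coeff q (r - (2*n+1))\<bar>) * L powr (real r / M)"
    by (metis distrib_right mult_right_mono powr_ge_zero)
  also have "\<dots> \<le> 2^Suc \<beta> * L powr (real (D + (2*n+1)) / M)"
    using t1 t2 by simp
  finally show ?case
    by (simp add: q_def D_def M_def algebra_simps)
qed

lemma Ef_pos: "Ef n t > 0" by (simp add: Ef_def)

lemma pow_Ef_bound:
  fixes L :: real
  assumes L1: "1 \<le> L" and NL: "real N \<le> L"
  shows "\<bar>t\<bar> ^ N * Ef n t \<le> L powr (real N / (2 * real n + 2))"
proof -
  define m where "m = 2*n+2"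
  define x where "x = \<bar>t\<bar> ^ N * Ef n t"
  define y where "y = \<bar>t\<bar> ^ m"
  have x0: "x \<ge> 0" by (simp add: x_def Ef_pos less_imp_le)
  have y0: "y \<ge> 0" by (simp add: y_def)
  have tm: "t ^ m = y" unfolding y_def m_def by (simp add: power_even_abs)
  have Em: "Ef n t ^ m = exp (- y)"
  proof -
    have "Ef n t ^ m = exp (real m * (- (t^m) / (2 * real n + 2)))"
      unfolding Ef_def m_def by (rule exp_of_nat_mult[symmetric])
    also have "real m * (- (t^m) / (2 * real n + 2)) = - y" using tm by (simp add: m_def field_simps)
    finally show ?thesis .
  qed
  have "x ^ m = y ^ N * exp (- y)"
    by (simp add: x_def power_mult_distrib Em y_def power_mult[symmetric] mult.commute)
  also have "\<dots> \<le> fact N"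
    using pow_le_exp_fact[OF y0, of N] by (simp add: exp_minus field_simps)
  also have "\<dots> \<le> real (N ^ N)" by (rule fact_le_power)
  also have "\<dots> = real N ^ N" by simp
  also have "\<dots> \<le> L ^ N" using NL by (intro power_mono) auto
  finally have xm: "x ^ m \<le> L ^ N" .
  have L0: "L > 0" using L1 by simp
  have "(L powr (real N / (2 * real n + 2))) ^ m = L ^ N"
  proof -
    have "(L powr (real N / (2 * real n + 2))) ^ m = L powr (real m * (real N / (2 * real n + 2)))"
      using L0 by (intro powr_power) simp
    also have "real m * (real N / (2 * real n + 2)) = real N" by (simp add: m_def field_simps)
    finally show ?thesis using L0 by (simp add: powr_realpow)
  qed
  show ?thesis
  proof (rule ccontr)
    assume "\<not> ?thesis"
    then have "L powr (real N / (2 * real n + 2)) < x" by (simp add: x_def)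
    then have "(L powr (real N / (2 * real n + 2))) ^ m < x ^ m"
      by (intro power_strict_mono) (auto simp: m_def)
    with xm \<open>(L powr (real N / (2 * real n + 2))) ^ m = L ^ N\<close> show False by simp
  qed
qed

lemma poly_sum_le:
  fixes p :: "real poly"
  assumes "degree p \<le> D"
  shows "poly p t = (\<Sum>r\<le>D. coeff p r * t ^ r)"
proof -
  have "poly p t = poly (\<Sum>i\<le>D. monom (coeff p i) i) t"
    using poly_as_sum_of_monoms'[OF assms] by simp
  also have "\<dots> = (\<Sum>r\<le>D. poly (monom (coeff p r) r) t)" by (simp add: poly_sum)
  also have "\<dots> = (\<Sum>r\<le>D. coeff p r * t ^ r)" by (rule sum.cong) (simp_all add: poly_monom)
  finally show ?thesis .
qed

lemma mono_bound1:
  fixes t :: real and j n \<alpha> \<beta> :: nat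
  defines "D \<equiv> j + (2*n+1)*\<beta>"
  defines "L \<equiv> real (D + \<alpha>) + 1"
  shows "\<bar>t ^ \<alpha> * (poly ((Dm n ^^ \<beta>) (monom 1 j)) t * Ef n t)\<bar>
     \<le> (real D + 1) * 2^\<beta> * L powr (real (D + \<alpha>) / (2 * real n + 2))"
proof -
  define q where "q = (Dm n ^^ \<beta>) (monom 1 j)"
  define M where "M = 2 * real n + 2"
  have M0: "M > 0" by (simp add: M_def)
  have L1: "1 \<le> L" by (simp add: L_def)
  have L0: "0 < L" using L1 by simp
  have deg: "degree q \<le> D"
    by (rule degree_le) (auto simp: q_def D_def intro: coeff_Dm_iter_zero)
  have "\<bar>t ^ \<alpha> * (poly q t * Ef n t)\<bar> = \<bar>\<Sum>r\<le>D. coeff q r * (t ^ (r + \<alpha>) * Ef n t)\<bar>"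
    by (simp add: poly_sum_le[OF deg] sum_distrib_left sum_distrib_right power_add algebra_simps)
  also have "\<dots> \<le> (\<Sum>r\<le>D. \<bar>coeff q r * (t ^ (r + \<alpha>) * Ef n t)\<bar>)"
    by (rule sum_abs)
  also have "\<dots> \<le> (\<Sum>r\<le>D. 2^\<beta> * L powr (real (D + \<alpha>) / M))"
  proof (rule sum_mono)
    fix r assume r: "r \<in> {..D}"
    have "\<bar>coeff q r * (t ^ (r + \<alpha>) * Ef n t)\<bar> = \<bar>coeff q r\<bar> * (\<bar>t\<bar> ^ (r + \<alpha>) * Ef n t)"
      using Ef_pos[of n t] by (simp add: abs_mult power_abs)
    also have "\<dots> \<le> \<bar>coeff q r\<bar> * L powr (real (r + \<alpha>) / M)"
      unfolding M_def using r by (intro mult_left_mono pow_Ef_bound L1) (auto simp: L_def)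
    also have "\<dots> = (\<bar>coeff q r\<bar> * L powr (real r / M)) * L powr (real \<alpha> / M)"
      by (simp add: powr_add[symmetric] add_divide_distrib)
    also have "\<dots> \<le> (2^\<beta> * L powr (real D / M)) * L powr (real \<alpha> / M)"
      unfolding q_def M_def D_def
      by (intro mult_right_mono coeff_bound L1) (auto simp: L_def D_def)
    also have "\<dots> = 2^\<beta> * L powr (real (D + \<alpha>) / M)"
      by (simp add: powr_add[symmetric] add_divide_distrib)
    finally show "\<bar>coeff q r * (t ^ (r + \<alpha>) * Ef n t)\<bar> \<le> 2^\<beta> * L powr (real (D + \<alpha>) / M)" .
  qed
  also have "\<dots> = (real D + 1) * 2^\<beta> * L powr (real (D + \<alpha>) / M)" by simp
  finally show ?thesis by (simp add: q_def M_def)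
qed

lemma powr_fact_le:
  fixes L c :: real
  assumes "1 \<le> L" "0 \<le> c" "c \<le> 1"
  shows "(L ^ b) powr c \<le> exp L * fact b powr c"
proof -
  have "(L ^ b) powr c \<le> (exp L * fact b) powr c"
    using assms pow_le_exp_fact[of L b] by (intro powr_mono2) auto
  also have "\<dots> = exp L powr c * fact b powr c" by (simp add: powr_mult)
  also have "exp L powr c = exp (L * c)" by (simp add: powr_def)
  also have "exp (L * c) \<le> exp L" using assms by (simp add: mult_left_le)
  finally show ?thesis by (simp add: mult_right_mono)
qed

lemma mono_bound2:
  fixes t :: real and i n \<alpha> \<beta> :: nat
  shows "\<bar>t ^ \<alpha> * (poly ((Dm n ^^ \<beta>) (monom 1 ((2*n+2)*i))) t * Ef n t)\<bar>
     \<le> exp (5 * (2 * real n + 2)) ^ (i + \<alpha> + \<beta> + 1) * fact i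
        * (fact \<alpha> powr (1 / (2 * real n + 2)) * fact \<beta> powr ((2 * real n + 1) / (2 * real n + 2)))"
proof -
  define D where "D = (2*n+2)*i + (2*n+1)*\<beta>"
  define L where "L = real (D + \<alpha>) + 1"
  define M where "M = 2 * real n + 2"
  define FA where "FA = fact \<alpha> powr (1 / M) * fact \<beta> powr ((2 * real n + 1) / M)"
  have M0: "M > 0" by (simp add: M_def)
  have L1: "1 \<le> L" by (simp add: L_def)
  have L0: "0 < L" using L1 by simp
  have b1: "\<bar>t ^ \<alpha> * (poly ((Dm n ^^ \<beta>) (monom 1 ((2*n+2)*i))) t * Ef n t)\<bar>
     \<le> (real D + 1) * 2^\<beta> * L powr (real (D + \<alpha>) / M)"
    using mono_bound1[where j="(2*n+2)*i" and n=n and \<alpha>=\<alpha> and \<beta>=\<beta> and t=t] by (simp add: D_def L_def M_def)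
  have e: "real (D + \<alpha>) / M = real i + real \<beta> * ((2 * real n + 1) / M) + real \<alpha> * (1 / M)"
  proof -
    have "real (D+\<alpha>) = M * real i + real \<beta> * (2*real n+1) + real \<alpha>"
      by (simp add: D_def M_def algebra_simps)
    then show ?thesis using M0 by (simp add: field_simps)
  qed
  have "L powr (real (D + \<alpha>) / M) = L ^ i * (L ^ \<beta>) powr ((2 * real n + 1) / M) * (L ^ \<alpha>) powr (1 / M)"
    unfolding e using L0 by (simp add: powr_add powr_realpow[symmetric] powr_powr)
  also have "\<dots> \<le> (exp L * fact i) * (exp L * fact \<beta> powr ((2 * real n + 1) / M))
       * (exp L * fact \<alpha> powr (1 / M))"
    using L1 M0 pow_le_exp_fact[of L i]
    by (intro mult_mono powr_fact_le) (auto simp: M_def)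
  also have "\<dots> = exp L ^ 3 * fact i * FA" by (simp add: FA_def power3_eq_cube)
  finally have b2: "L powr (real (D + \<alpha>) / M) \<le> exp L ^ 3 * fact i * FA" .
  have d1: "real D + 1 \<le> exp L"
  proof -
    have "real D + 1 \<le> exp (real D)" by (metis add.commute exp_ge_add_one_self_aux of_nat_0_le_iff)
    also have "\<dots> \<le> exp L" by (simp add: L_def)
    finally show ?thesis .
  qed
  have "(2::real) ^ \<beta> \<le> exp 1 ^ \<beta>"
    using exp_ge_add_one_self_aux[of 1] by (intro power_mono) auto
  also have "\<dots> = exp (real \<beta>)" by (simp add: exp_of_nat_mult[symmetric])
  also have "\<dots> \<le> exp L" by (simp add: L_def D_def)
  finally have d2: "(2::real) ^ \<beta> \<le> exp L" .
  have "(real D + 1) * 2^\<beta> * L powr (real (D + \<alpha>) / M) \<le> exp L * exp L * (exp L ^ 3 * fact i * FA)"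
    using d1 d2 b2 by (intro mult_mono) auto
  also have "\<dots> = exp (5 * L) * fact i * FA"
    by (simp add: exp_of_nat_mult[symmetric] power3_eq_cube exp_add[symmetric] algebra_simps)
  also have "exp (5 * L) \<le> exp (5 * (2 * real n + 2) * real (i + \<alpha> + \<beta> + 1))"
  proof -
    have "L \<le> (2 * real n + 2) * real (i + \<alpha> + \<beta> + 1)"
      by (simp add: L_def D_def algebra_simps)
    then have "5 * L \<le> 5 * (2 * real n + 2) * real (i + \<alpha> + \<beta> + 1)" by linarith
    then show ?thesis by simp
  qed
  also have "exp (5 * (2 * real n + 2) * real (i + \<alpha> + \<beta> + 1)) = exp (5 * (2 * real n + 2)) ^ (i + \<alpha> + \<beta> + 1)"
    by (metis exp_of_nat_mult mult.commute)
  finally show ?thesis using b1 by (simp add: FA_def M_def mult_right_mono)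
qed

lemma le_exp_self: "(x::real) \<le> exp x"
proof (cases "0 \<le> x")
  case True then show ?thesis using exp_ge_add_one_self_aux[OF True] by linarith
next
  case False then show ?thesis using exp_gt_zero[of x] by linarith
qed

lemma gchoose_bound:
  fixes x :: real
  assumes x: "\<bar>x\<bar> \<le> real k + 1" and r: "r \<le> k"
  shows "\<bar>x gchoose r\<bar> \<le> exp (2 * real k + 1)"
proof -
  have "\<bar>\<Prod>l=0..<r. x - real l\<bar> = (\<Prod>l=0..<r. \<bar>x - real l\<bar>)" by (rule abs_prod)
  also have "\<dots> \<le> (\<Prod>l=0..<r. 2 * real k + 1)"
  proof (rule prod_mono)
    fix l assume "l \<in> {0..<r}"
    then have "real l \<le> real k" using r by simp
    then show "0 \<le> \<bar>x - real l\<bar> \<and> \<bar>x - real l\<bar> \<le> 2 * real k + 1" using x by linarith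
  qed
  also have "\<dots> = (2 * real k + 1) ^ r" by simp
  finally have p: "\<bar>\<Prod>l=0..<r. x - real l\<bar> \<le> (2 * real k + 1) ^ r" .
  have "\<bar>x gchoose r\<bar> = \<bar>\<Prod>l=0..<r. x - real l\<bar> / fact r"
    by (simp add: gbinomial_prod_rev)
  also have "\<dots> \<le> (2 * real k + 1) ^ r / fact r"
    using p by (intro divide_right_mono) auto
  also have "\<dots> \<le> exp (2 * real k + 1)" by (rule exp_ge_pow_fact) simp
  finally show ?thesis .
qed

lemma alpha0_bounds: "- 1/2 \<le> alpha0 n" "alpha0 n \<le> 0"
  by (auto simp: alpha0_def field_simps)

lemma gchoose_lower:
  "exp (- real k) \<le> (real k + alpha0 n) gchoose k"
proof -
  have "(real k + alpha0 n) gchoose k = (\<Prod>i = 0..<k. (real k + alpha0 n - real i) / real (k - i))"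
    by (simp add: gbinomial_altdef_of_nat)
  also have "\<dots> \<ge> (\<Prod>i = 0..<k. 1/2)"
  proof (rule prod_mono)
    fix i assume "i \<in> {0..<k}"
    then have i: "i < k" by simp
    then have ki: "real (k - i) \<ge> 1" by simp
    have "real (k - i) = real k - real i" using i by simp
    then have "(real k + alpha0 n - real i) \<ge> real (k - i) / 2"
      using alpha0_bounds[of n] ki by linarith
    then show "0 \<le> (1::real)/2 \<and> 1/2 \<le> (real k + alpha0 n - real i) / real (k - i)"
      using ki by (simp add: field_simps)
  qed
  finally have "(1/2::real) ^ k \<le> (real k + alpha0 n) gchoose k" by simp
  moreover have "exp (- real k) \<le> (1/2::real) ^ k"
  proof -
    have "exp (- real k) = exp (-1) ^ k" by (simp add: exp_of_nat_mult[symmetric])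
    also have "\<dots> \<le> (1/2) ^ k"
    proof (intro power_mono)
      have "2 \<le> exp (1::real)" using exp_ge_add_one_self_aux[of 1] by simp
      then show "exp (-1) \<le> (1/2::real)" by (simp add: exp_minus field_simps)
    qed simp
    finally show ?thesis .
  qed
  ultimately show ?thesis by linarith
qed

lemma laguerre_lower:
  fixes x :: real
  assumes x0: "0 \<le> x" and x1: "x \<le> 2 * exp (- (4 * real k + 3))"
  shows "exp (- real k) / 2 \<le> laguerre (alpha0 n) k x"
proof -
  define f where "f i = (-1)^i * ((real k + alpha0 n) gchoose (k - i)) * x^i / fact i" for i
  have lag: "laguerre (alpha0 n) k x = f 0 + (\<Sum>i<k. f (Suc i))"
    unfolding laguerre_def f_def by (rule sum.atMost_shift)
  have f0: "f 0 \<ge> exp (- real k)" using gchoose_lower[of k n] by (simp add: f_def)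
  have e4: "4 \<le> exp (2::real)"
  proof -
    have "2 \<le> exp (1::real)" using exp_ge_add_one_self_aux[of 1] by simp
    then have "2 * 2 \<le> exp (1::real) * exp 1" by (intro mult_mono) auto
    then show ?thesis by (simp add: exp_add[symmetric])
  qed
  have xle1: "x \<le> 1"
  proof -
    have "exp (- (4 * real k + 3)) \<le> exp (-2)" by simp
    also have "exp (-2) \<le> (1/4::real)" using e4 by (simp add: exp_minus field_simps)
    finally show ?thesis using x1 by simp
  qed
  have abs_alpha: "\<bar>real k + alpha0 n\<bar> \<le> real k + 1" using alpha0_bounds[of n] by linarith
  have fs: "\<bar>f (Suc i)\<bar> \<le> exp (2 * real k + 1) * x" if "i < k" for i
  proof -
    have g: "\<bar>(real k + alpha0 n) gchoose (k - Suc i)\<bar> \<le> exp (2 * real k + 1)"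
      by (rule gchoose_bound[OF abs_alpha]) simp
    have xp: "x ^ Suc i \<le> x" using x0 xle1 by (simp add: power_le_one mult_left_le)
    have "\<bar>f (Suc i)\<bar> = \<bar>(real k + alpha0 n) gchoose (k - Suc i)\<bar> * x ^ Suc i / fact (Suc i)"
      using x0 by (simp add: f_def abs_mult)
    also have "\<dots> \<le> \<bar>(real k + alpha0 n) gchoose (k - Suc i)\<bar> * x ^ Suc i / 1"
      using x0 fact_ge_1[of "Suc i", where 'a=real] by (intro divide_left_mono) (auto simp del: fact_Suc)
    also have "\<dots> \<le> exp (2 * real k + 1) * x"
      unfolding div_by_1 using g xp x0 by (intro mult_mono) auto
    finally show ?thesis .
  qed
  have "\<bar>\<Sum>i<k. f (Suc i)\<bar> \<le> (\<Sum>i<k. \<bar>f (Suc i)\<bar>)" by (rule sum_abs)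
  also have "\<dots> \<le> (\<Sum>i<k. exp (2 * real k + 1) * x)" by (rule sum_mono) (use fs in auto)
  also have "\<dots> = real k * exp (2 * real k + 1) * x" by simp
  also have "\<dots> \<le> real k * exp (2 * real k + 1) * (2 * exp (- (4 * real k + 3)))"
    using x1 by (intro mult_left_mono) auto
  also have "\<dots> = 2 * real k * exp (- (2 * real k + 2))"
    by (simp add: exp_add[symmetric] algebra_simps)
  also have "\<dots> \<le> 2 * exp (real k) * exp (- (2 * real k + 2))"
  proof -
    have "real k \<le> exp (real k)" by (rule le_exp_self)
    then show ?thesis by (intro mult_right_mono) auto
  qed
  also have "\<dots> = 2 * exp (- real k) * exp (-2)" by (simp add: exp_add[symmetric] algebra_simps)
  also have "\<dots> \<le> 2 * exp (- real k) * (1/4)"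
    using e4 by (intro mult_left_mono) (auto simp: exp_minus field_simps)
  finally have "\<bar>\<Sum>i<k. f (Suc i)\<bar> \<le> exp (- real k) / 2" by simp
  then show ?thesis using lag f0 by linarith
qed

lemma u_lower:
  fixes t :: real
  assumes t0: "0 \<le> t" and t1: "t \<le> 2 * exp (- (4 * real k + 3))"
  shows "exp (- (real k + 2)) \<le> u_fun n k t"
proof -
  have e4: "4 \<le> exp (2::real)"
  proof -
    have "2 \<le> exp (1::real)" using exp_ge_add_one_self_aux[of 1] by simp
    then have "2 * 2 \<le> exp (1::real) * exp 1" by (intro mult_mono) auto
    then show ?thesis by (simp add: exp_add[symmetric])
  qed
  have "exp (- (4 * real k + 3)) \<le> exp (-2)" by simp
  also have "exp (-2) \<le> (1/4::real)" using e4 by (simp add: exp_minus field_simps)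
  finally have tle: "t \<le> 1" using t1 by simp
  have "t ^ (2*n+2) \<le> t ^ 1" by (rule power_decreasing) (use t0 tle in auto)
  then have tm: "t ^ (2*n+2) \<le> t" by simp
  have tm0: "0 \<le> t ^ (2*n+2)" using t0 by simp
  define x where "x = t ^ (2*n+2) / (real n + 1)"
  have x0: "0 \<le> x" using tm0 by (simp add: x_def)
  have "x \<le> t ^ (2*n+2)" unfolding x_def using tm0 by (simp add: divide_le_eq mult_le_cancel_left1)
  then have x1: "x \<le> 2 * exp (- (4 * real k + 3))" using tm t1 by linarith
  have lag: "exp (- real k) / 2 \<le> laguerre (alpha0 n) k x" by (rule laguerre_lower[OF x0 x1])
  have E: "exp (-1) \<le> exp (- (t ^ (2*n+2)) / (2 * real n + 2))"
  proof -
    have "t ^ (2*n+2) / (2 * real n + 2) \<le> 1"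
      using tm tle tm0 by (simp add: divide_le_eq)
    then show ?thesis by simp
  qed
  have h: "exp (-1) \<le> (1/2::real)"
  proof -
    have "2 \<le> exp (1::real)" using exp_ge_add_one_self_aux[of 1] by simp
    then show ?thesis by (simp add: exp_minus field_simps)
  qed
  have "exp (- (real k + 2)) = exp (-1) * (exp (- real k) * exp (-1))"
    by (simp add: exp_add[symmetric])
  also have "\<dots> \<le> exp (-1) * (exp (- real k) / 2)"
    using h by (intro mult_left_mono) (auto simp: field_simps)
  also have "\<dots> \<le> exp (- (t ^ (2*n+2)) / (2 * real n + 2)) * laguerre (alpha0 n) k x"
    using E lag by (intro mult_mono) auto
  also have "\<dots> = u_fun n k t" by (simp add: u_fun_def x_def)
  finally show ?thesis .
qed

lemma c_bound: "0 \<le> c_const n k \<and> c_const n k \<le> exp (4 * real n + 4) ^ (k + 1)"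
proof -
  define f where "f t = (t ^ n * u_fun n k t)^2" for t :: real
  define I where "I = integral\<^sup>L lborel f"
  have cI: "c_const n k = 1 / sqrt I" by (simp add: c_const_def I_def f_def[abs_def])
  have f0: "0 \<le> f t" for t by (simp add: f_def)
  have I0: "0 \<le> I" unfolding I_def by (rule integral_nonneg_AE) (simp add: f0)
  have Cpos: "0 \<le> exp (4 * real n + 4) ^ (k + 1)" by simp
  show ?thesis
  proof (cases "integrable lborel f")
    case False
    then have "I = 0" by (simp add: I_def not_integrable_integral_eq)
    then show ?thesis using cI Cpos by simp
  next
    case True
    define d :: real where "d = exp (- (4 * real k + 3))"
    define B :: real where "B = d ^ (2*n) * exp (- (2 * real k + 4))"
    have d0: "0 < d" by (simp add: d_def)
    have fB: "B * indicator {d..2*d} t \<le> f t" for t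
    proof (cases "t \<in> {d..2*d}")
      case False then show ?thesis by (simp add: f0)
    next
      case True
      then have t0: "0 \<le> t" "d \<le> t" "t \<le> 2 * exp (- (4 * real k + 3))" using d0 by (auto simp: d_def)
      have u: "exp (- (real k + 2)) \<le> u_fun n k t" by (rule u_lower[OF t0(1) t0(3)])
      have "B = (d ^ n * exp (- (real k + 2)))^2"
        by (simp add: B_def power_mult_distrib power_mult[symmetric] exp_of_nat_mult[symmetric] mult.commute)
      also have "\<dots> \<le> (t ^ n * u_fun n k t)^2"
        using t0 u d0 by (intro power_mono mult_mono) auto
      finally show ?thesis using True by (simp add: f_def)
    qed
    have "integral\<^sup>L lborel (\<lambda>t. B * indicator {d..2*d} t) \<le> I"
      unfolding I_def by (rule integral_mono'[OF True]) (auto simp: fB f0)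
    moreover have "integral\<^sup>L lborel (\<lambda>t. B * indicator {d..2*d} t) = B * d"
      using d0 by (simp add: integral_indicator)
    ultimately have IB: "B * d \<le> I" using d0 by simp
    define a :: real where "a = real (k+1) * (4 * real n + 4)"
    have "B * d = exp (- ((4 * real k + 3) * (2 * real n + 1) + (2 * real k + 4)))"
      by (simp add: B_def d_def exp_of_nat_mult[symmetric] exp_add[symmetric] algebra_simps)
    also have "\<dots> \<ge> exp (- (2 * a))"
      by (simp add: a_def algebra_simps)
    finally have Ia: "exp (- (2 * a)) \<le> I" using IB by linarith
    have "exp (- (2 * a)) = (exp (- a))^2" by (simp add: power2_eq_square exp_add[symmetric])
    then have "exp (- a) = sqrt (exp (- (2 * a)))" by simp
    also have "\<dots> \<le> sqrt I" using Ia by simp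
    finally have sI: "exp (- a) \<le> sqrt I" .
    have "1 / sqrt I \<le> 1 / exp (- a)"
    proof (rule divide_left_mono)
      have "0 < exp (- a)" by simp
      then have "0 < sqrt I" using sI by linarith
      then show "0 < sqrt I * exp (- a)" using \<open>0 < exp (- a)\<close> by (rule mult_pos_pos)
    qed (use sI in auto)
    also have "\<dots> = exp a" by (simp add: exp_minus divide_inverse)
    also have "\<dots> = exp (4 * real n + 4) ^ (k + 1)" unfolding a_def by (rule exp_of_nat_mult)
    finally show ?thesis using cI I0 by simp
  qed
qed

definition bco :: "nat \<Rightarrow> nat \<Rightarrow> nat \<Rightarrow> real" where
  "bco n k i = (-1)^i * ((real k + alpha0 n) gchoose (k - i)) / (fact i * (real n + 1)^i)"

definition Pk :: "nat \<Rightarrow> nat \<Rightarrow> real poly" where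
  "Pk n k = (\<Sum>i\<le>k. smult (bco n k i) (monom 1 ((2*n+2)*i)))"

lemma u_poly: "u_fun n k t = poly (Pk n k) t * Ef n t"
proof -
  have "laguerre (alpha0 n) k (t ^ (2*n+2) / (real n + 1)) = poly (Pk n k) t"
    unfolding laguerre_def Pk_def poly_sum
  proof (rule sum.cong)
    fix i assume "i \<in> {..k}"
    show "(-1)^i * ((real k + alpha0 n) gchoose (k - i)) * (t ^ (2*n+2) / (real n + 1))^i / fact i
        = poly (smult (bco n k i) (monom 1 ((2*n+2)*i))) t"
      by (simp only: bco_def poly_smult poly_monom power_mult power_divide) (simp add: field_simps)
  qed simp
  then show ?thesis by (simp add: u_fun_def Ef_def mult.commute)
qed

lemma v_eq: "v_fun n k = (\<lambda>t. c_const n k * (poly (Pk n k) t * Ef n t))"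
  by (rule ext) (simp add: v_fun_def u_poly)

lemma deriv_v:
  "(deriv ^^ \<beta>) (v_fun n k) t = c_const n k *
     (\<Sum>i\<le>k. bco n k i * (poly ((Dm n ^^ \<beta>) (monom 1 ((2*n+2)*i))) t * Ef n t))"
  unfolding v_eq deriv_iter Pk_def
  by (simp add: Dm_iter_sum poly_sum sum_distrib_right mult.assoc)

lemma smooth_v: "smooth_real (v_fun n k)"
  unfolding smooth_real_def v_eq deriv_iter real_differentiable_def
  using poly_Ef_deriv by blast

lemma bco_bound: "i \<le> k \<Longrightarrow> \<bar>bco n k i\<bar> * fact i \<le> exp (2 * real k + 1)"
proof -
  assume ik: "i \<le> k"
  have abs_alpha: "\<bar>real k + alpha0 n\<bar> \<le> real k + 1" using alpha0_bounds[of n] by linarith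
  have g: "\<bar>(real k + alpha0 n) gchoose (k - i)\<bar> \<le> exp (2 * real k + 1)"
    by (rule gchoose_bound[OF abs_alpha]) simp
  have p: "1 \<le> (real n + 1)^i" by simp
  have "\<bar>bco n k i\<bar> * fact i = \<bar>(real k + alpha0 n) gchoose (k - i)\<bar> / (real n + 1)^i"
    by (simp add: bco_def abs_mult)
  also have "\<dots> \<le> \<bar>(real k + alpha0 n) gchoose (k - i)\<bar> / 1"
    using p by (intro divide_left_mono) auto
  finally show ?thesis using g by simp
qed

lemma main_bound:
  fixes t :: real
  shows "\<bar>t ^ \<alpha> * (deriv ^^ \<beta>) (v_fun n k) t\<bar>
     \<le> (exp (4 * real n + 4) * exp 3 * exp (5 * (2 * real n + 2))) ^ (k + \<alpha> + \<beta> + 1)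
        * (fact \<alpha> powr (1 / (2 * real n + 2)) * fact \<beta> powr ((2 * real n + 1) / (2 * real n + 2)))"
proof -
  define K where "K = exp (5 * (2 * real n + 2))"
  define FA where "FA = fact \<alpha> powr (1 / (2 * real n + 2)) * fact \<beta> powr ((2 * real n + 1) / (2 * real n + 2))"
  define N where "N = k + \<alpha> + \<beta> + 1"
  define c where "c = c_const n k"
  have K1: "1 \<le> K" by (simp add: K_def)
  have FA0: "0 \<le> FA" by (simp add: FA_def)
  have c: "0 \<le> c" "c \<le> exp (4 * real n + 4) ^ (k + 1)" using c_bound[of n k] by (auto simp: c_def)
  have trm: "\<bar>bco n k i * (t ^ \<alpha> * (poly ((Dm n ^^ \<beta>) (monom 1 ((2*n+2)*i))) t * Ef n t))\<bar>
      \<le> exp (2 * real k + 1) * K ^ N * FA" if i: "i \<in> {..k}" for i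
  proof -
    have "\<bar>bco n k i * (t ^ \<alpha> * (poly ((Dm n ^^ \<beta>) (monom 1 ((2*n+2)*i))) t * Ef n t))\<bar>
        = \<bar>bco n k i\<bar> * \<bar>t ^ \<alpha> * (poly ((Dm n ^^ \<beta>) (monom 1 ((2*n+2)*i))) t * Ef n t)\<bar>"
      by (simp add: abs_mult)
    also have "\<dots> \<le> \<bar>bco n k i\<bar> * (K ^ (i + \<alpha> + \<beta> + 1) * fact i * FA)"
      using mono_bound2[where t=t and \<alpha>=\<alpha> and n=n and \<beta>=\<beta> and i=i] by (intro mult_left_mono) (auto simp: K_def FA_def)
    also have "\<dots> \<le> \<bar>bco n k i\<bar> * (K ^ N * fact i * FA)"
      using i K1 FA0 by (intro mult_left_mono mult_right_mono power_increasing) (auto simp: N_def)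
    also have "\<dots> = (\<bar>bco n k i\<bar> * fact i) * K ^ N * FA" by (simp add: algebra_simps)
    also have "\<dots> \<le> exp (2 * real k + 1) * K ^ N * FA"
      using bco_bound[of i k n] i K1 FA0 by (intro mult_right_mono) auto
    finally show ?thesis .
  qed
  have "\<bar>t ^ \<alpha> * (deriv ^^ \<beta>) (v_fun n k) t\<bar>
      = c * \<bar>\<Sum>i\<le>k. bco n k i * (t ^ \<alpha> * (poly ((Dm n ^^ \<beta>) (monom 1 ((2*n+2)*i))) t * Ef n t))\<bar>"
  proof -
    have "t ^ \<alpha> * (deriv ^^ \<beta>) (v_fun n k) t
      = c * (\<Sum>i\<le>k. bco n k i * (t ^ \<alpha> * (poly ((Dm n ^^ \<beta>) (monom 1 ((2*n+2)*i))) t * Ef n t)))"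
      unfolding deriv_v c_def by (simp add: sum_distrib_left mult_ac)
    then show ?thesis using c by (simp add: abs_mult)
  qed
  also have "\<dots> \<le> c * (\<Sum>i\<le>k. exp (2 * real k + 1) * K ^ N * FA)"
    using c by (intro mult_left_mono order_trans[OF sum_abs] sum_mono trm) auto
  also have "\<dots> = c * ((real k + 1) * exp (2 * real k + 1)) * K ^ N * FA" by (simp add: algebra_simps)
  also have "\<dots> \<le> exp (4 * real n + 4) ^ (k + 1) * exp 3 ^ (k + 1) * K ^ N * FA"
  proof -
    have "(real k + 1) * exp (2 * real k + 1) \<le> exp (real k) * exp (2 * real k + 1)"
      using exp_ge_add_one_self_aux[of "real k"] by (intro mult_right_mono) (auto simp: add.commute)
    also have "\<dots> = exp (3 * real k + 1)" by (simp add: exp_add[symmetric])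
    also have "\<dots> \<le> exp (real (k+1) * 3)" by simp
    also have "\<dots> = exp 3 ^ (k + 1)" by (rule exp_of_nat_mult)
    finally have "(real k + 1) * exp (2 * real k + 1) \<le> exp 3 ^ (k + 1)" .
    then show ?thesis using c K1 FA0
      by (intro mult_right_mono mult_mono) auto
  qed
  also have "\<dots> = (exp (4 * real n + 4) * exp 3) ^ (k + 1) * K ^ N * FA"
    by (simp add: power_mult_distrib)
  also have "\<dots> \<le> (exp (4 * real n + 4) * exp 3) ^ N * K ^ N * FA"
  proof -
    have "1 \<le> exp (4 * real n + 4) * exp (3::real)"
    proof -
      have "1 \<le> exp (4 * real n + 4 + 3)" by simp
      also have "exp (4 * real n + 4 + 3) = exp (4 * real n + 4) * exp 3" by (rule exp_add)
      finally show ?thesis .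
    qed
    then show ?thesis using K1 FA0
      by (intro mult_right_mono power_increasing) (auto simp: N_def)
  qed
  also have "\<dots> = (exp (4 * real n + 4) * exp 3 * K) ^ N * FA"
    by (simp add: power_mult_distrib)
  finally show ?thesis by (simp add: K_def N_def FA_def)
qed

lemma selfpow_nonneg: "0 \<le> selfpow a c" by (simp add: selfpow_def)

lemma fact_powr_selfpow:
  fixes c :: real
  assumes c: "0 \<le> c"
  shows "fact a powr c \<le> selfpow a c"
proof (cases "a = 0")
  case True then show ?thesis by (simp add: selfpow_def)
next
  case False
  then have a0: "0 < real a" by simp
  have "selfpow a c = (real a powr real a) powr c"
    using False by (simp add: selfpow_def powr_powr mult.commute)
  also have "real a powr real a = real a ^ a" using a0 by (rule powr_realpow)
  finally have s: "selfpow a c = (real a ^ a) powr c" .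
  have "fact a \<le> real a ^ a" using fact_le_power[of a, where 'a=real] by simp
  then have "fact a powr c \<le> (real a ^ a) powr c" using c by (intro powr_mono2) auto
  then show ?thesis using s by simp
qed

theorem theorem5p1:
  fixes n :: nat
  shows "(\<forall>k. v_fun n k \<in> gelfand_shilov (1 / (2 * real n + 2)) ((2 * real n + 1) / (2 * real n + 2)))
       \<and> (\<exists>Cv > 0. \<forall>k \<alpha> \<beta> (t::real).
            \<bar>t ^ \<alpha> * (deriv ^^ \<beta>) (v_fun n k) t\<bar>
              \<le> Cv ^ (k + \<alpha> + \<beta> + 1) * fact \<alpha> powr (1 / (2 * real n + 2))
                 * fact \<beta> powr ((2 * real n + 1) / (2 * real n + 2)))"
proof -
  define Cv where "Cv = exp (4 * real n + 4) * exp 3 * exp (5 * (2 * real n + 2))"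
  have Cv0: "Cv > 0" by (simp add: Cv_def)
  have main: "\<bar>t ^ \<alpha> * (deriv ^^ \<beta>) (v_fun n k) t\<bar>
              \<le> Cv ^ (k + \<alpha> + \<beta> + 1) * fact \<alpha> powr (1 / (2 * real n + 2))
                 * fact \<beta> powr ((2 * real n + 1) / (2 * real n + 2))" for k \<alpha> \<beta> and t :: real
    using main_bound[of t \<alpha> \<beta> n k] unfolding Cv_def by (simp add: mult.assoc)
  have gs: "v_fun n k \<in> gelfand_shilov (1 / (2 * real n + 2)) ((2 * real n + 1) / (2 * real n + 2))" for k
    unfolding gelfand_shilov_def mem_Collect_eq
  proof (intro conjI smooth_v)
    have bnd: "\<bar>t ^ a * (deriv ^^ q) (v_fun n k) t\<bar> \<le> Cv ^ (k + 1) * Cv ^ a * Cv ^ q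
        * selfpow a (1 / (2 * real n + 2)) * selfpow q ((2 * real n + 1) / (2 * real n + 2))"
      for a q and t :: real
    proof -
      have "\<bar>t ^ a * (deriv ^^ q) (v_fun n k) t\<bar>
          \<le> Cv ^ (k + a + q + 1) * fact a powr (1 / (2 * real n + 2))
                   * fact q powr ((2 * real n + 1) / (2 * real n + 2))" by (rule main)
      also have "\<dots> \<le> Cv ^ (k + a + q + 1) * selfpow a (1 / (2 * real n + 2))
                   * selfpow q ((2 * real n + 1) / (2 * real n + 2))"
        using Cv0 by (intro mult_mono fact_powr_selfpow) (auto simp: selfpow_nonneg)
      also have "\<dots> = Cv ^ (k + 1) * Cv ^ a * Cv ^ q * selfpow a (1 / (2 * real n + 2))
                   * selfpow q ((2 * real n + 1) / (2 * real n + 2))"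
        by (simp add: power_add[symmetric] add_ac)
      finally show ?thesis .
    qed
    show "\<exists>C A B. C > 0 \<and> A > 0 \<and> B > 0 \<and>
       (\<forall>k' q t. \<bar>t ^ k' * (deriv ^^ q) (v_fun n k) t\<bar> \<le> C * A ^ k' * B ^ q
          * selfpow k' (1 / (2 * real n + 2)) * selfpow q ((2 * real n + 1) / (2 * real n + 2)))"
      using bnd Cv0 zero_less_power[OF Cv0, of "k+1"] by blast
  qed
  show ?thesis using gs main Cv0 by blast
qed

end
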